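(* Every free-connex conjunctive query without self-joins has the head-domination property.
   Context: A conjunctive query (CQ) without self-joins is $Q(\mathbf{A}) :- R_1(\mathbb{A}_1), \ldots, R_m(\mathbb{A}_m)$ with pairwise distinct relation symbols, $\mathrm{attr}(R_i)=\mathbb{A}_i$, $\mathrm{attr}(Q)=\bigcup_i\mathbb{A}_i$, output attributes $\mathrm{head}(Q)=\mathbf{A}$, $\mathrm{head}(R_i)=\mathrm{head}(Q)\cap\mathrm{attr}(R_i)$. $Q$ is acyclic if there is a tree whose nodes are in one-to-one correspondence with the relations of $Q$ such that for every attribute $A\in\mathrm{attr}(Q)$, the nodes whose relations contain $A$ form a connected subtree. $Q$ is free-connex if $Q$ is acyclic and the CQ obtained by adding to $Q$ one further relation whose attribute set is exactly $\mathrm{head}(Q)$ is also acyclic. $G^\exists_Q$ has as vertices the relations with $\mathrm{attr}(R_i)\setminus\mathrm{head}(Q)\neq\emptyset$ and an edge between $R_i,R_j$ if $(\mathrm{attr}(R_i)\cap\mathrm{attr}(R_j))\setminus\mathrm{head}(Q)\neq\emptyset$. A relation $R_i$ of $Q$ is dominant for a set $E$ of relations if $\bigcup_{R_j\in E}\mathrm{head}(R_j)\subseteq\mathrm{head}(R_i)$. $Q$ has the head-domination property if for every connected component $E$ of $G^\exists_Q$ some relation of $Q$ is dominant for $E$. *)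

theory Defs
  imports Main
begin

text \<open>A self-join-free CQ with m relations R_0..R_(m-1) is represented by
  the attribute sets A i (i < m) and the head (output attributes) H.
  Since relation symbols are pairwise distinct, relations are identified with
  their indices.\<close>

definition connected_in :: "('v \<Rightarrow> 'v \<Rightarrow> bool) \<Rightarrow> 'v set \<Rightarrow> bool" where
  "connected_in adj S \<longleftrightarrow>
     (\<forall>x\<in>S. \<forall>y\<in>S. (\<lambda>u v. u \<in> S \<and> v \<in> S \<and> adj u v)\<^sup>*\<^sup>* x y)"

definition has_cycle :: "('v \<Rightarrow> 'v \<Rightarrow> bool) \<Rightarrow> 'v set \<Rightarrow> bool" where
  "has_cycle adj V \<longleftrightarrow>
     (\<exists>xs. length xs \<ge> 3 \<and> distinct xs \<and> set xs \<subseteq> V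
        \<and> (\<forall>i. Suc i < length xs \<longrightarrow> adj (xs ! i) (xs ! Suc i))
        \<and> adj (last xs) (hd xs))"

definition is_tree :: "'v set \<Rightarrow> ('v \<Rightarrow> 'v \<Rightarrow> bool) \<Rightarrow> bool" where
  "is_tree V T \<longleftrightarrow>
     (\<forall>u v. T u v \<longrightarrow> u \<in> V \<and> v \<in> V \<and> u \<noteq> v \<and> T v u)
     \<and> connected_in T V \<and> \<not> has_cycle T V"

definition acyclic_cq :: "nat \<Rightarrow> (nat \<Rightarrow> 'a set) \<Rightarrow> bool" where
  "acyclic_cq m A \<longleftrightarrow>
     (\<exists>T. is_tree {..<m} T \<and>
        (\<forall>x \<in> (\<Union>i<m. A i). connected_in T {i. i < m \<and> x \<in> A i}))"

definition free_connex :: "nat \<Rightarrow> (nat \<Rightarrow> 'a set) \<Rightarrow> 'a set \<Rightarrow> bool" where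
  "free_connex m A H \<longleftrightarrow>
     acyclic_cq m A \<and> acyclic_cq (Suc m) (A(m := H))"

definition exvert :: "nat \<Rightarrow> (nat \<Rightarrow> 'a set) \<Rightarrow> 'a set \<Rightarrow> nat set" where
  "exvert m A H = {i. i < m \<and> A i - H \<noteq> {}}"

definition exadj :: "(nat \<Rightarrow> 'a set) \<Rightarrow> 'a set \<Rightarrow> nat \<Rightarrow> nat \<Rightarrow> bool" where
  "exadj A H i j \<longleftrightarrow> i \<noteq> j \<and> (A i \<inter> A j) - H \<noteq> {}"

definition is_component :: "'v set \<Rightarrow> ('v \<Rightarrow> 'v \<Rightarrow> bool) \<Rightarrow> 'v set \<Rightarrow> bool" where
  "is_component V adj E \<longleftrightarrow>
     E \<noteq> {} \<and> E \<subseteq> V \<and> connected_in adj E \<and>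
     (\<forall>u v. u \<in> E \<and> v \<in> V \<and> adj u v \<longrightarrow> v \<in> E)"

definition dominant :: "(nat \<Rightarrow> 'a set) \<Rightarrow> 'a set \<Rightarrow> nat \<Rightarrow> nat set \<Rightarrow> bool" where
  "dominant A H k E \<longleftrightarrow> (\<Union>j\<in>E. H \<inter> A j) \<subseteq> H \<inter> A k"

definition head_domination :: "nat \<Rightarrow> (nat \<Rightarrow> 'a set) \<Rightarrow> 'a set \<Rightarrow> bool" where
  "head_domination m A H \<longleftrightarrow>
     (\<forall>E. is_component (exvert m A H) (exadj A H) E \<longrightarrow> (\<exists>k<m. dominant A H k E))"

end

theory Submission
  imports Defs "HOL-Library.Transitive_Closure_Table"
begin

lemma rp_last: "rtrancl_path r x xs y \<Longrightarrow> last (x#xs) = y"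
  by (induct rule: rtrancl_path.induct) auto

lemma rp_nth: "rtrancl_path r x xs y \<Longrightarrow> Suc i < length (x#xs) \<Longrightarrow> r ((x#xs)!i) ((x#xs)!Suc i)"
proof (induct arbitrary: i rule: rtrancl_path.induct)
  case (base x)
  then show ?case by simp
next
  case (step x y ys z)
  then show ?case by (cases i) (auto elim: rtrancl_path.cases)
qed

lemma rp_set: "rtrancl_path r x xs y \<Longrightarrow> (\<forall>a b. r a b \<longrightarrow> b \<in> V) \<Longrightarrow> set xs \<subseteq> V"
  by (induct rule: rtrancl_path.induct) auto

lemma mono_rt: "r\<^sup>*\<^sup>* x y \<Longrightarrow> (\<And>a b. r a b \<Longrightarrow> s a b) \<Longrightarrow> s\<^sup>*\<^sup>* x y"
  by (metis mono_rtranclp)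

lemma tree_cut:
  assumes tr: "is_tree V T" and ku: "T k u"
    and w: "(\<lambda>a b. T a b \<and> \<not>(a=k \<and> b=u) \<and> \<not>(a=u \<and> b=k))\<^sup>*\<^sup>* k u"
  shows False
proof -
  let ?T' = "(\<lambda>a b. T a b \<and> \<not>(a=k \<and> b=u) \<and> \<not>(a=u \<and> b=k))"
  from tr have sym: "\<And>a b. T a b \<Longrightarrow> a \<in> V \<and> b \<in> V \<and> a \<noteq> b \<and> T b a"
    unfolding is_tree_def by blast
  from tr have nc: "\<not> has_cycle T V" unfolding is_tree_def by blast
  from w obtain xs0 where "rtrancl_path ?T' k xs0 u" unfolding rtranclp_eq_rtrancl_path by blast
  then obtain xs where p: "rtrancl_path ?T' k xs u" and d: "distinct (k#xs)"
    by (rule rtrancl_path_distinct)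
  have kneq: "k \<noteq> u" using sym[OF ku] by blast
  have l: "last (k#xs) = u" using rp_last[OF p] .
  have "xs \<noteq> []" using l kneq by auto
  then obtain y ys where xs: "xs = y # ys" by (cases xs) auto
  have "ys \<noteq> []"
  proof
    assume "ys = []"
    then have "?T' k u" using p xs by (auto elim!: rtrancl_path.cases)
    then show False by simp
  qed
  then have len: "length (k#xs) \<ge> 3" using xs by (cases ys) auto
  have adj: "\<forall>i. Suc i < length (k#xs) \<longrightarrow> T ((k#xs)!i) ((k#xs)!Suc i)"
    using rp_nth[OF p] by blast
  have "\<forall>a b. ?T' a b \<longrightarrow> b \<in> V" using sym by blast
  then have "set xs \<subseteq> V" using rp_set[OF p, of V] by blast
  then have sv: "set (k#xs) \<subseteq> V" using sym[OF ku] by simp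
  have "T (last (k#xs)) (hd (k#xs))" using l sym[OF ku] by simp
  then have "has_cycle T V" unfolding has_cycle_def using len d sv adj by blast
  with nc show False by simp
qed

theorem lemma19:
  fixes m :: nat and A :: "nat \<Rightarrow> 'a set" and H :: "'a set"
  assumes "\<And>i. i < m \<Longrightarrow> finite (A i)"
    and "H \<subseteq> (\<Union>i<m. A i)"
    and "free_connex m A H"
  shows "head_domination m A H"
  unfolding head_domination_def
proof (intro allI impI)
  fix E assume comp: "is_component (exvert m A H) (exadj A H) E"
  define A' where "A' = A(m := H)"
  define V where "V = {..<Suc m}"
  from assms(3) obtain T where tr: "is_tree V T"
    and con: "\<forall>x \<in> (\<Union>i<Suc m. A' i). connected_in T {i. i < Suc m \<and> x \<in> A' i}"
    unfolding free_connex_def acyclic_cq_def A'_def V_def by blast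
  have sym: "\<And>a b. T a b \<Longrightarrow> a \<in> V \<and> b \<in> V \<and> a \<noteq> b \<and> T b a"
    using tr unfolding is_tree_def by blast
  have conV: "\<forall>x\<in>V. \<forall>y\<in>V. (\<lambda>u v. u \<in> V \<and> v \<in> V \<and> T u v)\<^sup>*\<^sup>* x y"
    using tr unfolding is_tree_def connected_in_def by blast
  have Esub: "E \<subseteq> exvert m A H" and Ene: "E \<noteq> {}"
    and Econ: "connected_in (exadj A H) E"
    and Eclos: "\<And>u v. u \<in> E \<Longrightarrow> v \<in> exvert m A H \<Longrightarrow> exadj A H u v \<Longrightarrow> v \<in> E"
    using comp unfolding is_component_def by blast+
  have Elt: "\<And>i. i \<in> E \<Longrightarrow> i < m" using Esub unfolding exvert_def by blast
  have mE: "m \<notin> E" using Elt by blast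
  have S_con: "\<And>x i j. i < Suc m \<Longrightarrow> x \<in> A' i \<Longrightarrow> j < Suc m \<Longrightarrow> x \<in> A' j \<Longrightarrow>
      (\<lambda>u v. u \<in> {i. i < Suc m \<and> x \<in> A' i} \<and> v \<in> {i. i < Suc m \<and> x \<in> A' i} \<and> T u v)\<^sup>*\<^sup>* i j"
  proof -
    fix x i j assume h: "i < Suc m" "x \<in> A' i" "j < Suc m" "x \<in> A' j"
    then have "x \<in> (\<Union>i<Suc m. A' i)" by blast
    with con have "connected_in T {i. i < Suc m \<and> x \<in> A' i}" by blast
    then show "(\<lambda>u v. u \<in> {i. i < Suc m \<and> x \<in> A' i} \<and> v \<in> {i. i < Suc m \<and> x \<in> A' i} \<and> T u v)\<^sup>*\<^sup>* i j"
      unfolding connected_in_def using h by blast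
  qed
  let ?RE = "\<lambda>a b. a \<in> E \<and> b \<in> E \<and> T a b"
  have Ewalk: "?RE\<^sup>*\<^sup>* i j" if "i \<in> E" "j \<in> E" for i j
  proof -
    have "(\<lambda>u v. u \<in> E \<and> v \<in> E \<and> exadj A H u v)\<^sup>*\<^sup>* i j"
      using Econ that unfolding connected_in_def by blast
    then show ?thesis
    proof (induct rule: rtranclp_induct)
      case base then show ?case by simp
    next
      case (step y z)
      then have yE: "y \<in> E" and zE: "z \<in> E" and "exadj A H y z" by auto
      then obtain x where x: "x \<in> A y" "x \<in> A z" "x \<notin> H" unfolding exadj_def by blast
      have ym: "y < m" "z < m" using Elt yE zE by auto
      have "(\<lambda>u v. u \<in> {i. i < Suc m \<and> x \<in> A' i} \<and> v \<in> {i. i < Suc m \<and> x \<in> A' i} \<and> T u v)\<^sup>*\<^sup>* y z"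
        using S_con[of y x z] ym x unfolding A'_def by auto
      moreover have "w \<in> E" if "w < Suc m" "x \<in> A' w" for w
      proof -
        have "w \<noteq> m" using that x(3) unfolding A'_def by auto
        then have wm: "w < m" "x \<in> A w" using that unfolding A'_def by auto
        then have wv: "w \<in> exvert m A H" using x(3) unfolding exvert_def by blast
        show "w \<in> E"
        proof (cases "w = y")
          case True then show ?thesis using yE by simp
        next
          case False
          then have "exadj A H y w" unfolding exadj_def using x wm by blast
          then show ?thesis using Eclos[OF yE wv] by blast
        qed
      qed
      ultimately have "?RE\<^sup>*\<^sup>* y z" by (elim mono_rt) auto
      with step show ?case by auto
    qed
  qed
  let ?AvE = "\<lambda>a b. a \<notin> E \<and> b \<notin> E \<and> T a b"
  obtain e where eE: "e \<in> E" using Ene by blast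
  have eV: "e \<in> V" "m \<in> V" using Elt[OF eE] unfolding V_def by auto
  have "(\<lambda>u v. u \<in> V \<and> v \<in> V \<and> T u v)\<^sup>*\<^sup>* m e" using conV eV by blast
  then have "(\<exists>k u. k \<in> E \<and> u \<notin> E \<and> T k u \<and> ?AvE\<^sup>*\<^sup>* m u) \<or> (e \<notin> E \<and> ?AvE\<^sup>*\<^sup>* m e)"
  proof (induct rule: rtranclp_induct)
    case base then show ?case using mE by simp
  next
    case (step y z)
    show ?case
    proof (cases "\<exists>k u. k \<in> E \<and> u \<notin> E \<and> T k u \<and> ?AvE\<^sup>*\<^sup>* m u")
      case True then show ?thesis by blast
    next
      case False
      with step have y: "y \<notin> E" "?AvE\<^sup>*\<^sup>* m y" and Tyz: "T y z" by auto
      show ?thesis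
      proof (cases "z \<in> E")
        case True
        then show ?thesis using y sym[OF Tyz] by blast
      next
        case False
        then have "?AvE\<^sup>*\<^sup>* m z" using y Tyz by (simp add: rtranclp.rtrancl_into_rtrancl)
        then show ?thesis using False by blast
      qed
    qed
  qed
  then obtain k u where kE: "k \<in> E" and uE: "u \<notin> E" and Tku: "T k u" and mu: "?AvE\<^sup>*\<^sup>* m u"
    using eE by blast
  let ?T' = "(\<lambda>a b. T a b \<and> \<not>(a=k \<and> b=u) \<and> \<not>(a=u \<and> b=k))"
  have nowalk: False if jE: "j \<in> E" and jm: "(\<lambda>a b. a \<noteq> k \<and> b \<noteq> k \<and> T a b)\<^sup>*\<^sup>* j m" for j
  proof -
    have 1: "?T'\<^sup>*\<^sup>* k j" using Ewalk[OF kE jE] by (elim mono_rt) (auto simp: uE)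
    have 2: "?T'\<^sup>*\<^sup>* j m" using jm by (elim mono_rt) auto
    have 3: "?T'\<^sup>*\<^sup>* m u"
    proof (rule mono_rt[OF mu])
      fix a b assume "?AvE a b" then show "?T' a b" using kE by auto
    qed
    have "?T'\<^sup>*\<^sup>* k u" using 1 2 3 by (meson rtranclp_trans)
    then show False using tree_cut[OF tr Tku] by blast
  qed
  have km: "k < m" using Elt[OF kE] .
  have "dominant A H k E"
    unfolding dominant_def
  proof
    fix h assume "h \<in> (\<Union>j\<in>E. H \<inter> A j)"
    then obtain j where jE: "j \<in> E" and hH: "h \<in> H" and hj: "h \<in> A j" by blast
    have jm: "j < m" using Elt[OF jE] .
    let ?S = "{i. i < Suc m \<and> h \<in> A' i}"
    have w: "(\<lambda>u v. u \<in> ?S \<and> v \<in> ?S \<and> T u v)\<^sup>*\<^sup>* j m"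
      using S_con[of j h m] jm hH hj unfolding A'_def by auto
    have "k \<in> ?S"
    proof (rule ccontr)
      assume "k \<notin> ?S"
      then have "(\<lambda>a b. a \<noteq> k \<and> b \<noteq> k \<and> T a b)\<^sup>*\<^sup>* j m"
        using w by (elim mono_rt) auto
      then show False using nowalk jE by blast
    qed
    then have "h \<in> A k" using km unfolding A'_def by auto
    then show "h \<in> H \<inter> A k" using hH by blast
  qed
  then show "\<exists>k<m. dominant A H k E" using km by blast
qed

end
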